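(* Let $X$ be a locally compact, Hausdorff, second countable space. Then $(\Gamma(X),\tau_{co})$ is a second countable space.
   Context: $\Gamma(X)$ denotes the set of all homeomorphisms $f:\mathrm{dom}(f)\to\mathrm{im}(f)$ between open subsets $\mathrm{dom}(f),\mathrm{im}(f)$ of $X$ (including the empty function $\emptyset$); it is an inverse semigroup under partial composition. The topology $\tau_{co}$ on $\Gamma(X)$ is the topology generated by the subbasic sets $\langle K,V\rangle=\{f\in\Gamma(X): K\subseteq\mathrm{dom}(f)\text{ and } f(K)\subseteq V\}$, where $K$ ranges over compact subsets of $X$ and $V$ over open subsets of $X$. *)

theory Defs
  imports "HOL-Analysis.Analysis"
begin

text \<open>Partial maps on the carrier of X are represented as Isabelle maps 'a \<Rightarrow> 'a option.
  Gamma X is the set of homeomorphisms between open subsets of X.\<close>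

definition Gamma :: "'a topology \<Rightarrow> ('a \<Rightarrow> 'a option) set" where
  "Gamma X = {f. openin X (dom f) \<and> openin X (ran f) \<and>
      homeomorphic_map (subtopology X (dom f)) (subtopology X (ran f)) (\<lambda>x. the (f x))}"

definition co_subbasic :: "'a topology \<Rightarrow> 'a set \<Rightarrow> 'a set \<Rightarrow> ('a \<Rightarrow> 'a option) set" where
  "co_subbasic X K V = {f \<in> Gamma X. K \<subseteq> dom f \<and> (\<lambda>x. the (f x)) ` K \<subseteq> V}"

definition tau_co :: "'a topology \<Rightarrow> ('a \<Rightarrow> 'a option) topology" where
  "tau_co X = subtopology
     (topology_generated_by {co_subbasic X K V | K V. compactin X K \<and> openin X V})
     (Gamma X)"

end

theory Submission
  imports Defs
begin

lemma key_nbhd: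
  assumes lc: "locally_compact_space X" and H: "Hausdorff_space X"
    and B: "\<And>V. V \<in> \<B> \<Longrightarrow> openin X V"
    and Bb: "\<And>U x. openin X U \<Longrightarrow> x \<in> U \<Longrightarrow> \<exists>W\<in>\<B>. x \<in> W \<and> W \<subseteq> U"
    and O: "openin X Op" and x: "x \<in> Op"
  shows "\<exists>W\<in>\<B>. x \<in> W \<and> compactin X (X closure_of W) \<and> X closure_of W \<subseteq> Op"
proof -
  have "regular_space X" using lc H locally_compact_Hausdorff_imp_regular_space by blast
  then have "neighbourhood_base_of (\<lambda>C. compactin X C \<and> closedin X C) X"
    using lc locally_compact_regular_space_neighbourhood_base by blast
  then obtain U M where U: "openin X U" "compactin X M" "closedin X M" "x \<in> U" "U \<subseteq> M" "M \<subseteq> Op"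
    unfolding neighbourhood_base_of using O x by metis
  obtain W where W: "W \<in> \<B>" "x \<in> W" "W \<subseteq> U" using Bb[OF U(1) U(4)] by blast
  have c: "X closure_of W \<subseteq> M" using U W by (meson closure_of_minimal order_trans)
  have "compactin X (X closure_of W)"
    using closed_compactin[OF U(2) c] by simp
  then show ?thesis using W c U by blast
qed

lemma key_sub:
  assumes lc: "locally_compact_space X" and H: "Hausdorff_space X"
    and B: "\<And>V. V \<in> \<B> \<Longrightarrow> openin X V"
    and Bb: "\<And>U x. openin X U \<Longrightarrow> x \<in> U \<Longrightarrow> \<exists>W\<in>\<B>. x \<in> W \<and> W \<subseteq> U"
    and C_def: "C = {co_subbasic X (X closure_of B1) B2 | B1 B2. B1 \<in> \<B> \<and> B2 \<in> \<B> \<and> compactin X (X closure_of B1)}"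
    and f: "f \<in> co_subbasic X K V" and K: "compactin X K" and V: "openin X V"
  shows "\<exists>F. finite F \<and> F \<subseteq> C \<and> f \<in> \<Inter>F \<and> Gamma X \<inter> \<Inter>F \<subseteq> co_subbasic X K V"
proof -
  define g where "g = (\<lambda>x. the (f x))"
  have fG: "f \<in> Gamma X" and Kd: "K \<subseteq> dom f" and gK: "g ` K \<subseteq> V"
    using f unfolding co_subbasic_def g_def by auto
  have od: "openin X (dom f)" and orn: "openin X (ran f)"
    and hm: "homeomorphic_map (subtopology X (dom f)) (subtopology X (ran f)) g"
    using fG unfolding Gamma_def g_def by auto
  have cm: "continuous_map (subtopology X (dom f)) (subtopology X (ran f)) g"
    using hm homeomorphic_imp_continuous_map by blast
  have dsub: "dom f \<subseteq> topspace X" using od openin_subset by blast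
  have "\<exists>B1 B2. B1 \<in> \<B> \<and> B2 \<in> \<B> \<and> compactin X (X closure_of B1) \<and> x \<in> B1 \<and>
          X closure_of B1 \<subseteq> dom f \<and> g ` (X closure_of B1) \<subseteq> B2 \<and> B2 \<subseteq> V" if xK: "x \<in> K" for x
  proof -
    obtain B2 where B2: "B2 \<in> \<B>" "g x \<in> B2" "B2 \<subseteq> V" using Bb[OF V] gK xK by blast
    have "openin (subtopology X (ran f)) (ran f \<inter> B2)"
      using B[OF B2(1)] by (simp add: openin_subtopology_Int2)
    then have "openin (subtopology X (dom f)) {y \<in> topspace (subtopology X (dom f)). g y \<in> ran f \<inter> B2}"
      using cm openin_continuous_map_preimage by blast
    moreover have "{y \<in> topspace (subtopology X (dom f)). g y \<in> ran f \<inter> B2} = {y \<in> dom f. g y \<in> B2}"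
      using dsub by (auto simp: g_def ran_def)
    ultimately have "openin X {y \<in> dom f. g y \<in> B2}"
      using od openin_trans_full by metis
    moreover have "x \<in> {y \<in> dom f. g y \<in> B2}" using xK Kd B2 by auto
    ultimately obtain B1 where B1: "B1 \<in> \<B>" "x \<in> B1" "compactin X (X closure_of B1)"
        "X closure_of B1 \<subseteq> {y \<in> dom f. g y \<in> B2}"
      using key_nbhd[OF lc H B Bb, of "{y \<in> dom f. g y \<in> B2}" x] by blast
    then have "X closure_of B1 \<subseteq> dom f" "g ` (X closure_of B1) \<subseteq> B2" by auto
    then show ?thesis using B2 B1 by blast
  qed
  then obtain b1 b2 where bb: "\<And>x. x \<in> K \<Longrightarrow> b1 x \<in> \<B> \<and> b2 x \<in> \<B> \<and> compactin X (X closure_of b1 x) \<and> x \<in> b1 x \<and>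
          X closure_of b1 x \<subseteq> dom f \<and> g ` (X closure_of b1 x) \<subseteq> b2 x \<and> b2 x \<subseteq> V"
    by metis
  have op: "\<forall>Bx\<in>b1 ` K. openin X Bx" using bb B by blast
  have cov: "K \<subseteq> \<Union>(b1 ` K)" using bb by blast
  have "\<forall>U. (\<forall>Bx\<in>U. openin X Bx) \<and> K \<subseteq> \<Union>U \<longrightarrow> (\<exists>T. finite T \<and> T \<subseteq> U \<and> K \<subseteq> \<Union>T)"
    using K unfolding compactin_def by blast
  then have "\<exists>T. finite T \<and> T \<subseteq> b1 ` K \<and> K \<subseteq> \<Union>T"
    using op cov by blast
  then obtain T0 where T0: "finite T0" "T0 \<subseteq> K" "K \<subseteq> (\<Union>x\<in>T0. b1 x)"
    by (metis finite_subset_image)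
  define F where "F = (\<lambda>x. co_subbasic X (X closure_of b1 x) (b2 x)) ` T0"
  have "finite F" using T0 F_def by simp
  moreover have "F \<subseteq> C" unfolding F_def C_def using T0 bb by blast
  moreover have "f \<in> \<Inter>F"
  proof -
    have "f \<in> co_subbasic X (X closure_of b1 x) (b2 x)" if "x \<in> T0" for x
    proof -
      have "x \<in> K" using that T0 by blast
      then show ?thesis using bb[of x] fG unfolding co_subbasic_def g_def by blast
    qed
    then show ?thesis unfolding F_def by blast
  qed
  moreover have "Gamma X \<inter> \<Inter>F \<subseteq> co_subbasic X K V"
  proof
    fix h assume h: "h \<in> Gamma X \<inter> \<Inter>F"
    have "h \<in> co_subbasic X (X closure_of b1 x) (b2 x)" if "x \<in> T0" for x
      using h that F_def by blast
    then have hx: "X closure_of b1 x \<subseteq> dom h \<and> (\<lambda>y. the (h y)) ` (X closure_of b1 x) \<subseteq> b2 x"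
      if "x \<in> T0" for x using that unfolding co_subbasic_def by blast
    have "b1 x \<subseteq> X closure_of b1 x" if "x \<in> T0" for x
    proof -
      have "x \<in> K" using that T0 by blast
      then have "openin X (b1 x)" using bb[of x] B by blast
      then show ?thesis using closure_of_subset openin_subset by metis
    qed
    show "h \<in> co_subbasic X K V"
      unfolding co_subbasic_def
    proof (intro CollectI conjI)
      show "h \<in> Gamma X" using h by blast
      show "K \<subseteq> dom h"
      proof
        fix y assume "y \<in> K"
        then obtain x where "x \<in> T0" "y \<in> b1 x" using T0 by blast
        then show "y \<in> dom h" using hx \<open>\<And>x. x \<in> T0 \<Longrightarrow> b1 x \<subseteq> X closure_of b1 x\<close> by blast
      qed
      show "(\<lambda>y. the (h y)) ` K \<subseteq> V"
      proof
        fix z assume "z \<in> (\<lambda>y. the (h y)) ` K"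
        then obtain y where y: "y \<in> K" "z = the (h y)" by blast
        then obtain x where x: "x \<in> T0" "y \<in> b1 x" using T0 by blast
        then have "z \<in> b2 x" using hx y \<open>\<And>x. x \<in> T0 \<Longrightarrow> b1 x \<subseteq> X closure_of b1 x\<close> by blast
        then show "z \<in> V" using bb x T0 by blast
      qed
    qed
  qed
  ultimately show ?thesis by blast
qed

theorem mainTheorem1:
  fixes X :: "'a topology"
  assumes "locally_compact_space X" and "Hausdorff_space X" and "second_countable X"
  shows "second_countable (tau_co X)"
proof -
  obtain \<B> where Bc: "countable \<B>" and B0: "\<forall>V \<in> \<B>. openin X V"
    and Bb0: "\<forall>U x. openin X U \<and> x \<in> U \<longrightarrow> (\<exists>W\<in>\<B>. x \<in> W \<and> W \<subseteq> U)"
    using assms(3) unfolding second_countable_def by (elim exE conjE)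
  have B: "\<And>V. V \<in> \<B> \<Longrightarrow> openin X V" using B0 by blast
  have Bb: "\<And>U x. openin X U \<Longrightarrow> x \<in> U \<Longrightarrow> \<exists>W\<in>\<B>. x \<in> W \<and> W \<subseteq> U"
    using Bb0 by blast
  define S where "S = {co_subbasic X K V | K V. compactin X K \<and> openin X V}"
  define C where "C = {co_subbasic X (X closure_of B1) B2 | B1 B2. B1 \<in> \<B> \<and> B2 \<in> \<B> \<and> compactin X (X closure_of B1)}"
  have CS: "C \<subseteq> S"
  proof
    fix c assume "c \<in> C"
    then obtain B1 B2 where "c = co_subbasic X (X closure_of B1) B2" "B2 \<in> \<B>" "compactin X (X closure_of B1)"
      unfolding C_def by blast
    then show "c \<in> S" unfolding S_def using B by blast
  qed
  have Cc: "countable C"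
  proof -
    have "C \<subseteq> (\<lambda>p. co_subbasic X (X closure_of fst p) (snd p)) ` (\<B> \<times> \<B>)"
    proof
      fix c assume "c \<in> C"
      then obtain B1 B2 where "c = co_subbasic X (X closure_of B1) B2" "B1 \<in> \<B>" "B2 \<in> \<B>"
        unfolding C_def by blast
      then show "c \<in> (\<lambda>p. co_subbasic X (X closure_of fst p) (snd p)) ` (\<B> \<times> \<B>)"
        by (intro image_eqI[of _ _ "(B1, B2)"]) auto
    qed
    moreover have "countable ((\<lambda>p. co_subbasic X (X closure_of fst p) (snd p)) ` (\<B> \<times> \<B>))"
      using Bc by (intro countable_image countable_SIGMA) auto
    ultimately show ?thesis by (rule countable_subset)
  qed
  define BB where "BB = (\<lambda>F. Gamma X \<inter> \<Inter>F) ` {F. finite F \<and> F \<subseteq> C}"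
  have tau: "tau_co X = subtopology (topology_generated_by S) (Gamma X)"
    unfolding tau_co_def S_def by simp
  have genF: "generate_topology_on S (\<Inter>F)" if "finite F" "F \<subseteq> S" "F \<noteq> {}" for F
    using that(1,3,2)
  proof (induction F rule: finite_ne_induct)
    case (singleton x) then show ?case using generate_topology_on.Basis[of x S] by simp
  next
    case (insert x F)
    have "generate_topology_on S x" using insert.prems generate_topology_on.Basis[of x S] by blast
    moreover have "generate_topology_on S (\<Inter>F)" using insert.prems insert.IH by blast
    ultimately show ?case using generate_topology_on.Int by (metis Inter_insert)
  qed
  have GS: "Gamma X \<in> S"
  proof -
    have "co_subbasic X {} {} = Gamma X" by (auto simp: co_subbasic_def)
    moreover have "compactin X {}" "openin X {}" by simp_all
    then have "co_subbasic X {} {} \<in> S" unfolding S_def by blast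
    ultimately show ?thesis by simp
  qed
  have BBopen: "openin (tau_co X) V" if BBV: "V \<in> BB" for V
  proof -
    obtain F where F: "finite F \<and> F \<subseteq> C" "V = Gamma X \<inter> \<Inter>F" using BBV unfolding BB_def by blast
    then have F: "finite F" "F \<subseteq> C" "V = Gamma X \<inter> \<Inter>F" by blast+
    have "generate_topology_on S (\<Inter>(insert (Gamma X) F))"
    proof (rule genF)
      show "finite (insert (Gamma X) F)" using F(1) by simp
      show "insert (Gamma X) F \<subseteq> S" using F(2) CS GS by blast
      show "insert (Gamma X) F \<noteq> {}" by simp
    qed
    then have "openin (topology_generated_by S) (\<Inter>(insert (Gamma X) F))"
      by (simp add: openin_topology_generated_by_iff)
    moreover have "V = \<Inter>(insert (Gamma X) F) \<inter> Gamma X" using F(3) by auto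
    ultimately show ?thesis unfolding tau openin_subtopology by blast
  qed
  have main: "\<forall>f \<in> U \<inter> Gamma X. \<exists>F. finite F \<and> F \<subseteq> C \<and> f \<in> \<Inter>F \<and> Gamma X \<inter> \<Inter>F \<subseteq> U"
    if "generate_topology_on S U" for U
    using that
  proof (induction rule: generate_topology_on.induct)
    case Empty then show ?case by simp
  next
    case (Int a b)
    show ?case
    proof
      fix f assume fab: "f \<in> a \<inter> b \<inter> Gamma X"
      then have "f \<in> a \<inter> Gamma X" "f \<in> b \<inter> Gamma X" by blast+
      then obtain Fa Fb where Fa: "finite Fa" "Fa \<subseteq> C" "f \<in> \<Inter>Fa" "Gamma X \<inter> \<Inter>Fa \<subseteq> a"
        and Fb: "finite Fb" "Fb \<subseteq> C" "f \<in> \<Inter>Fb" "Gamma X \<inter> \<Inter>Fb \<subseteq> b"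
        using Int.IH by meson
      have "finite (Fa \<union> Fb)" using Fa(1) Fb(1) by simp
      moreover have "Fa \<union> Fb \<subseteq> C" using Fa(2) Fb(2) by simp
      moreover have "f \<in> \<Inter>(Fa \<union> Fb)" using Fa(3) Fb(3) by blast
      moreover have "Gamma X \<inter> \<Inter>(Fa \<union> Fb) \<subseteq> a \<inter> b" using Fa(4) Fb(4) by auto
      ultimately show "\<exists>F. finite F \<and> F \<subseteq> C \<and> f \<in> \<Inter>F \<and> Gamma X \<inter> \<Inter>F \<subseteq> a \<inter> b"
        by blast
    qed
  next
    case (UN K)
    show ?case
    proof
      fix f assume "f \<in> \<Union>K \<inter> Gamma X"
      then obtain k where k: "k \<in> K" "f \<in> k \<inter> Gamma X" by blast
      then obtain F where F: "finite F" "F \<subseteq> C" "f \<in> \<Inter>F" "Gamma X \<inter> \<Inter>F \<subseteq> k"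
        using UN.IH by meson
      have "Gamma X \<inter> \<Inter>F \<subseteq> \<Union>K" using F(4) k(1) by blast
      then show "\<exists>F. finite F \<and> F \<subseteq> C \<and> f \<in> \<Inter>F \<and> Gamma X \<inter> \<Inter>F \<subseteq> \<Union>K"
        using F(1-3) by blast
    qed
  next
    case (Basis s)
    then obtain K V where s: "s = co_subbasic X K V" "compactin X K" "openin X V"
      unfolding S_def by blast
    show ?case
    proof
      fix f assume "f \<in> s \<inter> Gamma X"
      then have "f \<in> co_subbasic X K V" using s(1) by blast
      from key_sub[OF assms(1,2) B Bb C_def this s(2,3)] s(1)
      show "\<exists>F. finite F \<and> F \<subseteq> C \<and> f \<in> \<Inter>F \<and> Gamma X \<inter> \<Inter>F \<subseteq> s" by simp
    qed
  qed
  show ?thesis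
    unfolding second_countable_def
  proof (intro exI[of _ BB] conjI ballI allI impI)
    show "countable BB" unfolding BB_def using Cc by (intro countable_image countable_Collect_finite_subset)
    show "openin (tau_co X) V" if "V \<in> BB" for V using BBopen that by simp
    fix U f assume Uf: "openin (tau_co X) U \<and> f \<in> U"
    then have "openin (subtopology (topology_generated_by S) (Gamma X)) U" using tau by simp
    then obtain U' where "openin (topology_generated_by S) U'" and U'2: "U = U' \<inter> Gamma X"
      unfolding openin_subtopology by blast
    then have U': "generate_topology_on S U'" "U = U' \<inter> Gamma X"
      by (simp_all add: openin_topology_generated_by_iff)
    have fU': "f \<in> U' \<inter> Gamma X" using Uf U'(2) by blast
    have "\<exists>F. finite F \<and> F \<subseteq> C \<and> f \<in> \<Inter>F \<and> Gamma X \<inter> \<Inter>F \<subseteq> U'"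
      using main[OF U'(1)] fU' by (rule bspec)
    then obtain F where F: "finite F" "F \<subseteq> C" "f \<in> \<Inter>F" "Gamma X \<inter> \<Inter>F \<subseteq> U'"
      by blast
    have "Gamma X \<inter> \<Inter>F \<in> BB" unfolding BB_def
      by (rule image_eqI[of _ _ F]) (use F(1,2) in auto)
    moreover have "f \<in> Gamma X \<inter> \<Inter>F" using F(3) fU' by blast
    moreover have "Gamma X \<inter> \<Inter>F \<subseteq> U" using F(4) U'(2) by blast
    ultimately show "\<exists>V\<in>BB. f \<in> V \<and> V \<subseteq> U" by blast
  qed
qed

end
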